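(* Let $\mathcal A=\{A_s\}_{s\in\mathbf S}\subset CQ(\mathbf X,\mathcal H)$ be an AVcqC with $\mathbf S$ finite, $l\in\mathbb N$, $\mu_l$ an $(l,M_l)$-random code for $\mathcal A$ and $0\le\varepsilon_l<1$ with $$\inf_{s^l\in\mathbf S^l}\int\frac1{M_l}\sum_{i=1}^{M_l}\mathrm{tr}(A_{s^l}(x_i^l)D_i^l)\,d\mu_l\big((x_i^l,D_i^l)_{i=1}^{M_l}\big)\ge1-\varepsilon_l.$$ Let $n,m\in\mathbb R$ be such that $l^n\in\mathbb N$. If $4\varepsilon_l\le l^{-m}$ and $2\log|\mathbf S|<l^{n-m-1}$, then there exist $l^n$ deterministic $(l,M_l)$-codes $(x_{i,j}^l,D_{i,j}^l)_{i=1}^{M_l}$, $1\le j\le l^n$, such that $$\frac1{l^n}\sum_{j=1}^{l^n}\frac1{M_l}\sum_{i=1}^{M_l}\mathrm{tr}(A_{s^l}(x_{i,j}^l)D_{i,j}^l)\ge1-l^{-m}\quad\text{for all }s^l\in\mathbf S^l.$$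
   Context: $\mathbf X$ finite, $\mathcal H$ finite-dimensional complex Hilbert space, $CQ(\mathbf X,\mathcal H)$ the maps $\mathbf X\to\mathcal S(\mathcal H)$; $A_{s^l}(x^l)=\bigotimes_iA_{s_i}(x_i)$. An $(l,M)$ deterministic code is $(x_i^l,D_i^l)_{i=1}^M$ with $x_i^l\in\mathbf X^l$, $D_i^l\ge0$ on $\mathcal H^{\otimes l}$, $\sum_iD_i^l\le\mathbf 1$; an $(l,M)$-random code is a probability measure on the set of such tuples (with a sigma-algebra making the success functions measurable). Logs base 2. *)

theory Defs
  imports "HOL-Probability.Probability" "Jordan_Normal_Form.Matrix"
begin

text \<open>Operators on the finite-dimensional Hilbert space C^d are d x d complex matrices.\<close>

definition mtrace :: "complex mat \<Rightarrow> complex" where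
  "mtrace A = (\<Sum>i<dim_row A. A $$ (i, i))"

definition psd :: "nat \<Rightarrow> complex mat \<Rightarrow> bool" where
  "psd d A \<longleftrightarrow> A \<in> carrier_mat d d \<and>
     (\<forall>v \<in> carrier_vec d. (conjugate v \<bullet> (A *\<^sub>v v)) \<in> \<real> \<and> 0 \<le> Re (conjugate v \<bullet> (A *\<^sub>v v)))"

definition density :: "nat \<Rightarrow> complex mat \<Rightarrow> bool" where
  "density d A \<longleftrightarrow> psd d A \<and> mtrace A = 1"

definition kron :: "complex mat \<Rightarrow> complex mat \<Rightarrow> complex mat" where
  "kron A B = mat (dim_row A * dim_row B) (dim_col A * dim_col B)
     (\<lambda>(i, j). A $$ (i div dim_row B, j div dim_col B) * B $$ (i mod dim_row B, j mod dim_col B))"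

definition tensor_list :: "complex mat list \<Rightarrow> complex mat" where
  "tensor_list As = foldr kron As (1\<^sub>m 1)"

definition cq_channel :: "nat \<Rightarrow> ('x \<Rightarrow> complex mat) \<Rightarrow> bool" where
  "cq_channel d W \<longleftrightarrow> (\<forall>x. density d (W x))"

definition prod_channel :: "('s \<Rightarrow> 'x \<Rightarrow> complex mat) \<Rightarrow> 's list \<Rightarrow> 'x list \<Rightarrow> complex mat" where
  "prod_channel A ss xs = tensor_list (map2 (\<lambda>s x. A s x) ss xs)"

definition msum :: "nat \<Rightarrow> complex mat list \<Rightarrow> complex mat" where
  "msum N Ds = foldr (+) Ds (0\<^sub>m N N)"

definition det_code :: "nat \<Rightarrow> nat \<Rightarrow> nat \<Rightarrow> ('x list \<times> complex mat) list \<Rightarrow> bool" where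
  "det_code d l M c \<longleftrightarrow> length c = M \<and>
     (\<forall>i<M. length (fst (c ! i)) = l \<and> psd (d ^ l) (snd (c ! i))) \<and>
     psd (d ^ l) (1\<^sub>m (d ^ l) - msum (d ^ l) (map snd c))"

definition avg_success :: "('s \<Rightarrow> 'x \<Rightarrow> complex mat) \<Rightarrow> 's list \<Rightarrow> ('x list \<times> complex mat) list \<Rightarrow> real" where
  "avg_success A ss c = (1 / real (length c)) *
     (\<Sum>i<length c. Re (mtrace (prod_channel A ss (fst (c ! i)) * snd (c ! i))))"

definition random_code :: "nat \<Rightarrow> ('s \<Rightarrow> 'x \<Rightarrow> complex mat) \<Rightarrow> nat \<Rightarrow> nat \<Rightarrow>
    ('x list \<times> complex mat) list measure \<Rightarrow> bool" where
  "random_code d A l M \<mu> \<longleftrightarrow> prob_space \<mu> \<and> space \<mu> \<subseteq> {c. det_code d l M c} \<and>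
     (\<forall>ss. length ss = l \<longrightarrow> (\<lambda>c. avg_success A ss c) \<in> borel_measurable \<mu>)"

end

theory Submission
  imports Defs "HOL-Analysis.Harmonic_Numbers"
begin


definition qf :: "nat \<Rightarrow> (nat\<Rightarrow>nat\<Rightarrow>complex) \<Rightarrow> (nat \<Rightarrow> complex) \<Rightarrow> complex" where
 "qf n A u = (\<Sum>j<n. \<Sum>i<n. cnj (u j) * A j i * u i)"

definition hpsd :: "nat \<Rightarrow> (nat\<Rightarrow>nat\<Rightarrow>complex) \<Rightarrow> bool" where
 "hpsd n A \<longleftrightarrow> (\<forall>u. qf n A u \<in> \<real> \<and> 0 \<le> Re (qf n A u))"

lemma ifz: "(if b then x else 0) * (y::'a::mult_zero) = (if b then x * y else 0)"
  "y * (if b then x else 0) = (if b then y*x else 0)"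
  "cnj (if b then z else 0) = (if b then cnj z else 0)" by auto

lemma qf_add_delta:
  fixes A :: "nat\<Rightarrow>nat\<Rightarrow>complex"
  assumes "p < n"
  shows "qf n A (\<lambda>k. v k + (if k = p then c else 0)) =
     qf n A v + cnj c * (\<Sum>i<n. A p i * v i) + (\<Sum>j<n. cnj (v j) * A j p) * c + cnj c * A p p * c"
proof -
  have "qf n A (\<lambda>k. v k + (if k = p then c else 0)) =
    (\<Sum>j<n. \<Sum>i<n. cnj (v j) * A j i * v i + cnj (v j) * A j i * (if i = p then c else 0)
      + (if j = p then cnj c else 0) * A j i * v i + (if j = p then cnj c else 0) * A j i * (if i = p then c else 0))"
    unfolding qf_def by (intro sum.cong refl) (auto simp: algebra_simps)
  also have "\<dots> = qf n A v + (\<Sum>j<n. \<Sum>i<n. cnj (v j) * A j i * (if i = p then c else 0))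
     + (\<Sum>j<n. \<Sum>i<n. (if j = p then cnj c else 0) * A j i * v i)
     + (\<Sum>j<n. \<Sum>i<n. (if j = p then cnj c else 0) * A j i * (if i = p then c else 0))"
    by (simp add: sum.distrib qf_def)
  also have "(\<Sum>j<n. \<Sum>i<n. cnj (v j) * A j i * (if i = p then c else 0)) = (\<Sum>j<n. cnj (v j) * A j p) * c"
    using assms by (simp add: sum_distrib_right ifz cong: if_cong)
  also have "(\<Sum>j<n. \<Sum>i<n. (if j = p then cnj c else 0) * A j i * v i) = cnj c * (\<Sum>i<n. A p i * v i)"
    using assms by (subst sum.swap) (simp add: sum_distrib_left ifz mult.assoc cong: if_cong)
  also have "(\<Sum>j<n. \<Sum>i<n. (if j = p then cnj c else 0) * A j i * (if i = p then c else 0)) = cnj c * A p p * c"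
    using assms by (simp add: ifz cong: if_cong)
  finally show ?thesis by (simp add: algebra_simps)
qed

lemma qf_zero: "qf n A (\<lambda>k. 0) = 0" by (simp add: qf_def)

lemma qf_delta2:
  fixes A :: "nat\<Rightarrow>nat\<Rightarrow>complex"
  assumes "i < n" "j < n"
  shows "qf n A (\<lambda>k. (if k = i then a else 0) + (if k = j then b else 0)) =
    cnj a*A i i*a + cnj b * A j i * a + cnj a * A i j * b + cnj b*A j j*b"
proof -
  have 1: "qf n A (\<lambda>k. (if k = i then a else 0)) = cnj a*A i i*a"
    using qf_add_delta[of i n A "\<lambda>k. 0" a] assms by (simp add: qf_zero)
  show ?thesis
    using qf_add_delta[of j n A "\<lambda>k. (if k = i then a else 0)" b] assms
    by (simp add: 1 ifz cong: if_cong)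
qed

lemma hpsd_diag: assumes "hpsd n A" "i < n" shows "A i i \<in> \<real>" "0 \<le> Re (A i i)"
proof -
  have "qf n A (\<lambda>k. (if k = i then 1 else 0) + (if k = i then 0 else 0)) = A i i"
    using qf_delta2[OF assms(2) assms(2), of A 1 0] by simp
  then show "A i i \<in> \<real>" "0 \<le> Re (A i i)" using assms(1) unfolding hpsd_def by (metis (no_types))+
qed

lemma hpsd_herm: assumes "hpsd n A" "i < n" "j < n" shows "A j i = cnj (A i j)"
proof -
  have e1: "qf n A (\<lambda>k. (if k = i then 1 else 0) + (if k = j then 1 else 0)) = A i i + A j i + A i j + A j j"
    using qf_delta2[OF assms(2,3), of A 1 1] by simp
  have r1: "A i i + A j i + A i j + A j j \<in> \<real>"
    using assms(1) unfolding hpsd_def e1[symmetric] by blast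
  have e2: "qf n A (\<lambda>k. (if k = i then 1 else 0) + (if k = j then \<i> else 0)) = A i i + (-\<i>) * A j i + \<i> * A i j + A j j"
    using qf_delta2[OF assms(2,3), of A 1 "\<i>"] by (simp add: algebra_simps)
  have r2: "A i i + (-\<i>) * A j i + \<i> * A i j + A j j \<in> \<real>"
    using assms(1) unfolding hpsd_def e2[symmetric] by blast
  have d1: "Im (A i i) = 0" "Im (A j j) = 0" using hpsd_diag[OF assms(1)] assms complex_is_Real_iff by auto
  from r1 r2 d1 have "Im (A j i) + Im (A i j) = 0" "Re (A i j) - Re (A j i) = 0"
    by (auto simp: complex_is_Real_iff)
  then show ?thesis by (intro complex_eqI) auto
qed

lemma hpsd_zero_row: assumes "hpsd n A" "p < n" "j < n" "A p p = 0" shows "A j p = 0"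
proof (rule ccontr)
  let ?z = "A j p"
  assume z: "?z \<noteq> 0"
  have h: "A p j = cnj ?z" using hpsd_herm[OF assms(1) assms(3) assms(2)] .
  define s where "s = (Re (A j j) + 1) / (Re ?z ^ 2 + Im ?z ^ 2)"
  have pos: "Re ?z ^ 2 + Im ?z ^ 2 > 0" using z by (simp add: complex_eq_iff sum_power2_gt_zero_iff)
  define t where "t = - complex_of_real s * cnj ?z"
  have q: "qf n A (\<lambda>k. (if k = j then 1 else 0) + (if k = p then t else 0)) =
     A j j + cnj t * A p j + A j p * t"
    using qf_delta2[OF assms(3) assms(2), of A 1 t] assms(4) by simp
  have "Re (cnj t * A p j + A j p * t) = - 2 * s * (Re ?z ^ 2 + Im ?z ^ 2)"
    unfolding t_def h by (simp add: algebra_simps power2_eq_square)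
  also have "\<dots> = - 2 * (Re (A j j) + 1)"
  proof -
    have "s * (Re ?z ^ 2 + Im ?z ^ 2) = Re (A j j) + 1" proof -
      have X0: "Re ?z ^ 2 + Im ?z ^ 2 \<noteq> 0" using pos by linarith
      show ?thesis unfolding s_def using X0 by simp
    qed
    then show ?thesis by simp
  qed
  finally have "Re (qf n A (\<lambda>k. (if k = j then 1 else 0) + (if k = p then t else 0))) = - Re (A j j) - 2"
    unfolding q by simp
  moreover have "0 \<le> Re (A j j)" using hpsd_diag[OF assms(1) assms(3)] by simp
  moreover have "0 \<le> Re (qf n A (\<lambda>k. (if k = j then 1 else 0) + (if k = p then t else 0)))"
    using assms(1) unfolding hpsd_def by blast
  ultimately show False by linarith
qed

lemma decomp_aux:
  fixes A :: "nat\<Rightarrow>nat\<Rightarrow>complex"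
  shows "n - k = m \<Longrightarrow> hpsd n A \<Longrightarrow> (\<forall>i<n. \<forall>j<n. (i < k \<or> j < k) \<longrightarrow> A i j = 0) \<Longrightarrow>
    \<exists>(K::nat) us. \<forall>i<n. \<forall>j<n. A i j = (\<Sum>q<K. us q i * cnj (us q j))"
proof (induction m arbitrary: k A)
  case 0
  then have z: "\<forall>i<n. \<forall>j<n. A i j = 0" by auto
  show ?case
    using z by (intro exI[where x="0::nat"]) simp
next
  case (Suc m)
  define p where "p = k"
  have pn: "p < n" using Suc.prems(1) p_def by linarith
  have nm: "n - Suc k = m" using Suc.prems(1) by linarith
  have herm: "\<And>i j. i<n \<Longrightarrow> j<n \<Longrightarrow> A j i = cnj (A i j)" using hpsd_herm[OF Suc.prems(2)] by blast
  show ?case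
  proof (cases "A p p = 0")
    case True
    have "\<forall>i<n. \<forall>j<n. (i < Suc k \<or> j < Suc k) \<longrightarrow> A i j = 0"
    proof (intro allI impI)
      fix i j assume ij: "i < n" "j < n" "i < Suc k \<or> j < Suc k"
      show "A i j = 0"
      proof (cases "i < k \<or> j < k")
        case True then show ?thesis using Suc.prems(3) ij by auto
      next
        case False
        then have "i = p \<or> j = p" using ij p_def by auto
        then show ?thesis
        proof
          assume "i = p"
          then show ?thesis using hpsd_zero_row[OF Suc.prems(2) pn ij(2) True] herm[OF ij(2) pn] by simp
        next
          assume "j = p" then show ?thesis using hpsd_zero_row[OF Suc.prems(2) pn ij(1) True] by simp
        qed
      qed
    qed
    from Suc.IH[OF nm Suc.prems(2) this] show ?thesis .
  next
    case False
    define \<alpha> where "\<alpha> = A p p"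
    have \<alpha>R: "\<alpha> \<in> \<real>" "0 \<le> Re \<alpha>" using hpsd_diag[OF Suc.prems(2) pn] \<alpha>_def by auto
    define a where "a = Re \<alpha>"
    have \<alpha>a: "\<alpha> = complex_of_real a" using \<alpha>R(1) a_def by (simp add: complex_is_Real_iff complex_eq_iff)
    have \<alpha>0: "\<alpha> \<noteq> 0" using False \<alpha>_def by simp
    have "a \<noteq> 0" using \<alpha>0 \<alpha>a by auto
    then have apos: "a > 0" using \<alpha>R(2) a_def by linarith
    have cnja: "cnj \<alpha> = \<alpha>" using \<alpha>a by simp
    define A' where "A' = (\<lambda>i j. A i j - A i p * A p j / \<alpha>)"
    have hA': "hpsd n A'"
      unfolding hpsd_def
    proof
      fix v
      define s where "s = (\<Sum>i<n. A p i * v i)"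
      define c where "c = - s / \<alpha>"
      have cs: "(\<Sum>j<n. cnj (v j) * A j p) = cnj s"
        unfolding s_def by (auto simp: herm[OF pn] mult.commute intro!: sum.cong)
      have cs2: "(\<Sum>j<n. \<Sum>i<n. cnj (v j) * (A j p * A p i / \<alpha>) * v i) = cnj s * s / \<alpha>"
      proof -
        have "(\<Sum>j<n. cnj (v j) * A j p) * (\<Sum>i<n. A p i * v i) / \<alpha>
            = (\<Sum>j<n. \<Sum>i<n. cnj (v j) * A j p * (A p i * v i) / \<alpha>)"
          by (simp add: sum_product sum_divide_distrib)
        also have "\<dots> = (\<Sum>j<n. \<Sum>i<n. cnj (v j) * (A j p * A p i / \<alpha>) * v i)"
          by (intro sum.cong refl) (simp add: mult_ac)
        finally have "(\<Sum>j<n. \<Sum>i<n. cnj (v j) * (A j p * A p i / \<alpha>) * v i)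
           = (\<Sum>j<n. cnj (v j) * A j p) * (\<Sum>i<n. A p i * v i) / \<alpha>" by simp
        then show ?thesis unfolding cs s_def[symmetric] by simp
      qed
      have e1: "qf n A' v = qf n A v - cnj s * s / \<alpha>"
      proof -
        have "qf n A' v = (\<Sum>j<n. \<Sum>i<n. cnj (v j) * A j i * v i - cnj (v j) * (A j p * A p i / \<alpha>) * v i)"
          unfolding qf_def A'_def by (intro sum.cong refl) (simp add: right_diff_distrib left_diff_distrib)
        also have "\<dots> = qf n A v - cnj s * s / \<alpha>"
          using cs2 by (simp add: sum_subtractf qf_def)
        finally show ?thesis .
      qed
      have e2: "qf n A (\<lambda>k. v k + (if k = p then c else 0)) = qf n A v - cnj s * s / \<alpha>"
      proof -
        have "qf n A (\<lambda>k. v k + (if k = p then c else 0)) = qf n A v + cnj c * s + cnj s * c + cnj c * \<alpha> * c"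
          using qf_add_delta[OF pn, of A v c] unfolding cs s_def[symmetric] \<alpha>_def[symmetric] by simp
        also have "\<dots> = qf n A v - cnj s * s / \<alpha>"
          unfolding c_def using \<alpha>0 cnja by (simp add: field_simps)
        finally show ?thesis .
      qed
      show "qf n A' v \<in> \<real> \<and> 0 \<le> Re (qf n A' v)"
        using Suc.prems(2) unfolding hpsd_def e1 e2[symmetric] by blast
    qed
    have vanish: "\<forall>i<n. \<forall>j<n. (i < Suc k \<or> j < Suc k) \<longrightarrow> A' i j = 0"
    proof (intro allI impI)
      fix i j assume ij: "i < n" "j < n" "i < Suc k \<or> j < Suc k"
      show "A' i j = 0"
      proof (cases "i < k")
        case True
        then show ?thesis using Suc.prems(3) ij pn unfolding A'_def by auto
      next
        case F1: False
        show ?thesis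
        proof (cases "j < k")
          case True
          then show ?thesis using Suc.prems(3) ij pn unfolding A'_def by auto
        next
          case False
          then have "i = p \<or> j = p" using ij F1 p_def by auto
          then show ?thesis unfolding A'_def using \<alpha>0 \<alpha>_def by auto
        qed
      qed
    qed
    obtain K :: nat and us where IH: "\<forall>i<n. \<forall>j<n. A' i j = (\<Sum>q<K. us q i * cnj (us q j))"
      using Suc.IH[OF nm hA' vanish] by blast
    define u where "u = (\<lambda>i. A i p / complex_of_real (sqrt a))"
    have Aeq: "\<And>i j. i<n \<Longrightarrow> j<n \<Longrightarrow> A i j = A' i j + u i * cnj (u j)"
    proof -
      fix i j assume ij: "i<n" "j<n"
      have sqa: "sqrt a * sqrt a = a" using apos by simp
      have sq: "complex_of_real (sqrt a) * complex_of_real (sqrt a) = \<alpha>"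
        unfolding \<alpha>a by (metis of_real_mult sqa)
      have cu: "cnj (u j) = A p j / complex_of_real (sqrt a)"
        unfolding u_def using herm[OF pn ij(2)] by simp
      have "u i * cnj (u j) = A i p * A p j / \<alpha>"
        unfolding cu unfolding u_def sq[symmetric] by simp
      then show "A i j = A' i j + u i * cnj (u j)" unfolding A'_def by simp
    qed
    define us' where "us' = (\<lambda>q. if q < K then us q else u)"
    show ?thesis
    proof (intro exI[of _ "Suc K"] exI[of _ us'] allI impI)
      fix i j assume ij: "i<n" "j<n"
      have "(\<Sum>q<Suc K. us' q i * cnj (us' q j)) = (\<Sum>q<K. us q i * cnj (us q j)) + u i * cnj (u j)"
        unfolding us'_def by simp
      then show "A i j = (\<Sum>q<Suc K. us' q i * cnj (us' q j))" using Aeq[OF ij] IH ij by simp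
    qed
  qed
qed

lemma hpsd_decomp: "hpsd n A \<Longrightarrow> \<exists>(K::nat) us. \<forall>i<n. \<forall>j<n. A i j = (\<Sum>q<K. us q i * cnj (us q j))"
proof -
  assume h: "hpsd n A"
  have "\<forall>i<n. \<forall>j<n. (i < 0 \<or> j < 0) \<longrightarrow> A i j = 0" by simp
  then show ?thesis by (rule decomp_aux[of n 0 n A, OF diff_zero h])
qed

lemma qf_mat: fixes u :: "nat \<Rightarrow> complex" assumes "D \<in> carrier_mat n n"
  shows "conjugate (vec n u) \<bullet> (D *\<^sub>v vec n u) = qf n (\<lambda>i j. D $$ (i,j)) u"
proof -
  have dimv: "dim_vec (D *\<^sub>v vec n u) = n" using assms by simp
  have w: "(D *\<^sub>v vec n u) $ j = (\<Sum>i<n. D $$ (j,i) * u i)" if j: "j < n" for j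
  proof -
    have "(D *\<^sub>v vec n u) $ j = row D j \<bullet> vec n u" using assms j by simp
    also have "\<dots> = (\<Sum>i\<in>{0..<n}. row D j $ i * vec n u $ i)" unfolding scalar_prod_def by simp
    also have "\<dots> = (\<Sum>i<n. D $$ (j,i) * u i)" unfolding atLeast0LessThan
      using assms j by (intro sum.cong refl) simp
    finally show ?thesis .
  qed
  have "conjugate (vec n u) \<bullet> (D *\<^sub>v vec n u) = (\<Sum>j\<in>{0..<n}. conjugate (vec n u) $ j * (D *\<^sub>v vec n u) $ j)"
    unfolding scalar_prod_def dimv ..
  also have "\<dots> = (\<Sum>j<n. cnj (u j) * (\<Sum>i<n. D $$ (j,i) * u i))"
    unfolding atLeast0LessThan by (intro sum.cong refl) (simp add: w)
  also have "\<dots> = qf n (\<lambda>i j. D $$ (i,j)) u" unfolding qf_def by (simp add: sum_distrib_left mult.assoc)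
  finally show ?thesis .
qed

lemma psd_hpsd: assumes "psd n D" shows "hpsd n (\<lambda>i j. D $$ (i,j))"
  unfolding hpsd_def
proof
  fix u :: "nat \<Rightarrow> complex"
  have D: "D \<in> carrier_mat n n" using assms unfolding psd_def by auto
  have all: "\<forall>v\<in>carrier_vec n. conjugate v \<bullet> (D *\<^sub>v v) \<in> \<real> \<and> 0 \<le> Re (conjugate v \<bullet> (D *\<^sub>v v))"
    using assms unfolding psd_def by blast
  have "conjugate (vec n u) \<bullet> (D *\<^sub>v vec n u) \<in> \<real> \<and> 0 \<le> Re (conjugate (vec n u) \<bullet> (D *\<^sub>v vec n u))"
    using all vec_carrier by blast
  then show "qf n (\<lambda>i j. D $$ (i,j)) u \<in> \<real> \<and> 0 \<le> Re (qf n (\<lambda>i j. D $$ (i,j)) u)"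
    unfolding qf_mat[OF D] .
qed

definition decomp :: "nat \<Rightarrow> complex mat \<Rightarrow> nat \<Rightarrow> (nat \<Rightarrow> nat \<Rightarrow> complex) \<Rightarrow> bool" where
  "decomp n P K us \<longleftrightarrow> (\<forall>i<n. \<forall>j<n. P $$ (i,j) = (\<Sum>q<K. us q i * cnj (us q j)))"

lemma psd_decomp: "psd n D \<Longrightarrow> \<exists>K us. decomp n D K us"
  unfolding decomp_def using hpsd_decomp[OF psd_hpsd] by blast

lemma trace_decomp:
  assumes P: "P \<in> carrier_mat n n" and D: "D \<in> carrier_mat n n" and dc: "decomp n P K us"
  shows "mtrace (P * D) = (\<Sum>q<K. qf n (\<lambda>i j. D $$ (i,j)) (us q))"
proof -
  have "mtrace (P * D) = (\<Sum>i<n. \<Sum>k<n. P $$ (i,k) * D $$ (k,i))"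
    unfolding mtrace_def using P D
    by (auto simp: scalar_prod_def atLeast0LessThan intro!: sum.cong)
  also have "\<dots> = (\<Sum>i<n. \<Sum>k<n. \<Sum>q<K. cnj (us q k) * D $$ (k,i) * us q i)"
    using dc unfolding decomp_def by (auto simp: sum_distrib_left sum_distrib_right mult_ac intro!: sum.cong)
  also have "\<dots> = (\<Sum>i<n. \<Sum>q<K. \<Sum>k<n. cnj (us q k) * D $$ (k,i) * us q i)"
    by (intro sum.cong refl sum.swap)
  also have "\<dots> = (\<Sum>q<K. \<Sum>i<n. \<Sum>k<n. cnj (us q k) * D $$ (k,i) * us q i)"
    by (rule sum.swap)
  also have "\<dots> = (\<Sum>q<K. \<Sum>k<n. \<Sum>i<n. cnj (us q k) * D $$ (k,i) * us q i)"
    by (intro sum.cong refl sum.swap)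
  finally show ?thesis unfolding qf_def .
qed

lemma lt_mult_aux: "x < a \<Longrightarrow> y < b \<Longrightarrow> x * b + y < a * (b::nat)"
proof -
  assume "x < a" "y < b"
  then have "Suc x * b \<le> a * b" by (intro mult_le_mono1) simp
  then show ?thesis using \<open>y < b\<close> by simp
qed

lemma mod_lt_aux: "k < a * (b::nat) \<Longrightarrow> k mod b < b" by (cases "b = 0") auto

lemma sum_divmod: "(\<Sum>k<(a::nat)*b. f k) = (\<Sum>x<a. \<Sum>y<b. f (x*b+y))"
proof -
  have "(\<Sum>(x,y)\<in>{..<a}\<times>{..<b}. f (x*b+y)) = (\<Sum>k<a*b. f k)"
    by (rule sum.reindex_bij_witness[where i="\<lambda>k. (k div b, k mod b)" and j="\<lambda>(x,y). x*b+y"])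
      (auto simp: lt_mult_aux less_mult_imp_div_less mod_lt_aux)
  then show ?thesis by (simp add: sum.cartesian_product)
qed

lemma kron_carrier: "P \<in> carrier_mat a a \<Longrightarrow> Q \<in> carrier_mat b b \<Longrightarrow> kron P Q \<in> carrier_mat (a*b) (a*b)"
  unfolding kron_def carrier_mat_def by simp

lemma kron_index: "P \<in> carrier_mat a a \<Longrightarrow> Q \<in> carrier_mat b b \<Longrightarrow> i < a*b \<Longrightarrow> j < a*b \<Longrightarrow>
   kron P Q $$ (i,j) = P $$ (i div b, j div b) * Q $$ (i mod b, j mod b)"
proof -
  assume a: "P \<in> carrier_mat a a" "Q \<in> carrier_mat b b" "i < a*b" "j < a*b"
  then have "dim_row P = a" "dim_col P = a" "dim_row Q = b" "dim_col Q = b" by auto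
  then show ?thesis unfolding kron_def using a(3,4) by simp
qed

lemma kron_trace: assumes P: "P \<in> carrier_mat a a" and Q: "Q \<in> carrier_mat b b"
  shows "mtrace (kron P Q) = mtrace P * mtrace Q"
proof -
  have "mtrace (kron P Q) = (\<Sum>k<a*b. kron P Q $$ (k,k))"
    unfolding mtrace_def using kron_carrier[OF P Q] by simp
  also have "\<dots> = (\<Sum>x<a. \<Sum>y<b. kron P Q $$ (x*b+y, x*b+y))" by (rule sum_divmod)
  also have "\<dots> = (\<Sum>x<a. \<Sum>y<b. P $$ (x,x) * Q $$ (y,y))"
    by (intro sum.cong refl) (simp add: kron_index[OF P Q] lt_mult_aux)
  also have "\<dots> = mtrace P * mtrace Q"
    unfolding mtrace_def using P Q by (simp add: sum_product)
  finally show ?thesis .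
qed

lemma kron_decomp:
  assumes P: "P \<in> carrier_mat a a" and Q: "Q \<in> carrier_mat b b"
    and dP: "decomp a P K1 us" and dQ: "decomp b Q K2 ws"
  shows "decomp (a*b) (kron P Q) (K1*K2) (\<lambda>q i. us (q div K2) (i div b) * ws (q mod K2) (i mod b))"
  unfolding decomp_def
proof (intro allI impI)
  fix i j assume ij: "i < a*b" "j < a*b"
  have b0: "b > 0" using ij by (cases b) auto
  have lt: "i div b < a" "j div b < a" "i mod b < b" "j mod b < b"
    using ij b0 by (auto simp: less_mult_imp_div_less)
  have "kron P Q $$ (i,j) = P $$ (i div b, j div b) * Q $$ (i mod b, j mod b)"
    using kron_index[OF P Q ij] .
  also have "\<dots> = (\<Sum>x<K1. \<Sum>y<K2. (us x (i div b) * ws y (i mod b)) * cnj (us x (j div b) * ws y (j mod b)))"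
    using dP dQ lt unfolding decomp_def by (simp add: sum_product mult_ac)
  also have "\<dots> = (\<Sum>q<K1*K2. (us (q div K2) (i div b) * ws (q mod K2) (i mod b)) * cnj (us (q div K2) (j div b) * ws (q mod K2) (j mod b)))"
    by (subst sum_divmod) (intro sum.cong refl, auto)
  finally show "kron P Q $$ (i,j) = (\<Sum>q<K1*K2. (us (q div K2) (i div b) * ws (q mod K2) (i mod b)) * cnj (us (q div K2) (j div b) * ws (q mod K2) (j mod b)))" .
qed

lemma tensor_list_props:
  "(\<forall>B\<in>set Bs. B \<in> carrier_mat d d \<and> mtrace B = 1 \<and> (\<exists>K us. decomp d B K us)) \<Longrightarrow>
   tensor_list Bs \<in> carrier_mat (d^length Bs) (d^length Bs) \<and> mtrace (tensor_list Bs) = 1 \<and>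
   (\<exists>K us. decomp (d^length Bs) (tensor_list Bs) K us)"
proof (induction Bs)
  case Nil
  have "decomp 1 (1\<^sub>m 1) 1 (\<lambda>q i. 1)" unfolding decomp_def by auto
  then show ?case unfolding tensor_list_def mtrace_def by auto
next
  case (Cons B Bs)
  have tl: "tensor_list (B # Bs) = kron B (tensor_list Bs)" unfolding tensor_list_def by simp
  from Cons.prems have B: "B \<in> carrier_mat d d" "mtrace B = 1" and dB: "\<exists>K us. decomp d B K us" by auto
  from Cons.IH Cons.prems have T: "tensor_list Bs \<in> carrier_mat (d^length Bs) (d^length Bs)"
    "mtrace (tensor_list Bs) = 1" and dT: "\<exists>K us. decomp (d^length Bs) (tensor_list Bs) K us" by auto
  obtain K1 us where 1: "decomp d B K1 us" using dB by blast
  obtain K2 ws where 2: "decomp (d^length Bs) (tensor_list Bs) K2 ws" using dT by blast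
  show ?case unfolding tl using kron_carrier[OF B(1) T(1)] kron_trace[OF B(1) T(1)] B T
      kron_decomp[OF B(1) T(1) 1 2] by auto
qed



lemma qf_add: assumes "D1 \<in> carrier_mat n n" "D2 \<in> carrier_mat n n"
  shows "qf n (\<lambda>i j. (D1 + D2) $$ (i,j)) u = qf n (\<lambda>i j. D1 $$ (i,j)) u + qf n (\<lambda>i j. D2 $$ (i,j)) u"
proof -
  have "qf n (\<lambda>i j. (D1 + D2) $$ (i,j)) u = (\<Sum>j<n. \<Sum>i<n. cnj (u j) * D1 $$ (j,i) * u i + cnj (u j) * D2 $$ (j,i) * u i)"
    unfolding qf_def using assms by (intro sum.cong refl) (simp add: ring_distribs)
  then show ?thesis by (simp add: sum.distrib qf_def)
qed

lemma qf_minus: assumes "D1 \<in> carrier_mat n n" "D2 \<in> carrier_mat n n"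
  shows "qf n (\<lambda>i j. (D1 - D2) $$ (i,j)) u = qf n (\<lambda>i j. D1 $$ (i,j)) u - qf n (\<lambda>i j. D2 $$ (i,j)) u"
proof -
  have "qf n (\<lambda>i j. (D1 - D2) $$ (i,j)) u = (\<Sum>j<n. \<Sum>i<n. cnj (u j) * D1 $$ (j,i) * u i - cnj (u j) * D2 $$ (j,i) * u i)"
    unfolding qf_def using assms by (intro sum.cong refl) (simp add: ring_distribs)
  then show ?thesis by (simp add: sum_subtractf qf_def)
qed

definition phi :: "nat \<Rightarrow> nat \<Rightarrow> (nat \<Rightarrow> nat \<Rightarrow> complex) \<Rightarrow> complex mat \<Rightarrow> complex" where
  "phi n K us D = (\<Sum>q<K. qf n (\<lambda>i j. D $$ (i,j)) (us q))"

lemma phi_add: "D1 \<in> carrier_mat n n \<Longrightarrow> D2 \<in> carrier_mat n n \<Longrightarrow> phi n K us (D1 + D2) = phi n K us D1 + phi n K us D2"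
  unfolding phi_def by (simp add: qf_add sum.distrib)

lemma phi_minus: "D1 \<in> carrier_mat n n \<Longrightarrow> D2 \<in> carrier_mat n n \<Longrightarrow> phi n K us (D1 - D2) = phi n K us D1 - phi n K us D2"
  unfolding phi_def by (simp add: qf_minus sum_subtractf)

lemma phi_psd: "psd n D \<Longrightarrow> 0 \<le> Re (phi n K us D)"
  unfolding phi_def Re_sum using psd_hpsd[of n D] unfolding hpsd_def by (intro sum_nonneg) blast

lemma phi_zero: "phi n K us (0\<^sub>m n n) = 0"
  unfolding phi_def qf_def by (intro sum.neutral ballI) simp

lemma phi_msum: "(\<forall>D\<in>set Ds. psd n D) \<Longrightarrow> msum n Ds \<in> carrier_mat n n \<and> 0 \<le> Re (phi n K us (msum n Ds)) \<and>
   (\<forall>D0\<in>set Ds. Re (phi n K us D0) \<le> Re (phi n K us (msum n Ds)))"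
proof (induction Ds)
  case Nil
  then show ?case unfolding msum_def by (simp add: phi_zero)
next
  case (Cons D Ds)
  have ms: "msum n (D # Ds) = D + msum n Ds" unfolding msum_def by simp
  have D: "psd n D" "D \<in> carrier_mat n n" using Cons.prems unfolding psd_def by auto
  from Cons.IH Cons.prems have IH: "msum n Ds \<in> carrier_mat n n" "0 \<le> Re (phi n K us (msum n Ds))"
    "\<forall>D0\<in>set Ds. Re (phi n K us D0) \<le> Re (phi n K us (msum n Ds))" by auto
  have e: "Re (phi n K us (msum n (D # Ds))) = Re (phi n K us D) + Re (phi n K us (msum n Ds))"
    unfolding ms using phi_add[OF D(2) IH(1)] by simp
  have p: "0 \<le> Re (phi n K us D)" using phi_psd[OF D(1)] .
  show ?case unfolding e using IH p D(2) ms by auto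
qed

lemma term_bounds:
  assumes rho: "\<rho> \<in> carrier_mat N N" "mtrace \<rho> = 1" "decomp N \<rho> K us"
    and Ds: "\<forall>D\<in>set Ds. psd N D" and I: "psd N (1\<^sub>m N - msum N Ds)" and D0: "D0 \<in> set Ds"
  shows "0 \<le> Re (mtrace (\<rho> * D0)) \<and> Re (mtrace (\<rho> * D0)) \<le> 1"
proof -
  have D0p: "psd N D0" using Ds D0 by auto
  then have D0c: "D0 \<in> carrier_mat N N" unfolding psd_def by auto
  have t: "mtrace (\<rho> * D0) = phi N K us D0" unfolding phi_def using trace_decomp[OF rho(1) D0c rho(3)] .
  have "mtrace (\<rho> * 1\<^sub>m N) = phi N K us (1\<^sub>m N)" unfolding phi_def using trace_decomp[OF rho(1) _ rho(3)] by simp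
  then have one: "phi N K us (1\<^sub>m N) = 1" using rho(1,2) by simp
  from phi_msum[OF Ds] have M: "msum N Ds \<in> carrier_mat N N" "Re (phi N K us D0) \<le> Re (phi N K us (msum N Ds))"
    using D0 by auto
  have "0 \<le> Re (phi N K us (1\<^sub>m N - msum N Ds))" using phi_psd[OF I] .
  also have "phi N K us (1\<^sub>m N - msum N Ds) = 1 - phi N K us (msum N Ds)"
    using phi_minus[OF one_carrier_mat M(1)] one by simp
  finally show ?thesis unfolding t using phi_psd[OF D0p] M(2) by simp
qed

lemma prod_channel_props:
  assumes ch: "\<forall>s. cq_channel d (A s)" and ss: "length ss = l" and xs: "length xs = l"
  shows "prod_channel A ss xs \<in> carrier_mat (d^l) (d^l) \<and> mtrace (prod_channel A ss xs) = 1 \<and>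
     (\<exists>K us. decomp (d^l) (prod_channel A ss xs) K us)"
proof -
  have len: "length (map2 (\<lambda>s x. A s x) ss xs) = l" using ss xs by simp
  have "\<forall>B\<in>set (map2 (\<lambda>s x. A s x) ss xs). B \<in> carrier_mat d d \<and> mtrace B = 1 \<and> (\<exists>K us. decomp d B K us)"
  proof
    fix B assume "B \<in> set (map2 (\<lambda>s x. A s x) ss xs)"
    then obtain s x where B: "B = A s x" by auto
    have "density d B" using ch unfolding B cq_channel_def by auto
    then show "B \<in> carrier_mat d d \<and> mtrace B = 1 \<and> (\<exists>K us. decomp d B K us)"
      unfolding density_def using psd_decomp[of d B] unfolding psd_def by auto
  qed
  from tensor_list_props[OF this] show ?thesis unfolding prod_channel_def len .
qed

lemma avg_bounds:
  assumes ch: "\<forall>s. cq_channel d (A s)" and c: "det_code d l M c" and ss: "length ss = l"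
  shows "0 \<le> avg_success A ss c \<and> avg_success A ss c \<le> 1"
proof -
  have lc: "length c = M" using c unfolding det_code_def by auto
  have Ds: "\<forall>D\<in>set (map snd c). psd (d^l) D"
  proof
    fix D assume "D \<in> set (map snd c)"
    then obtain i where i: "i < length c" and D: "D = snd (c ! i)"
      unfolding in_set_conv_nth by auto
    show "psd (d^l) D" using c lc i unfolding det_code_def D by auto
  qed
  have I: "psd (d^l) (1\<^sub>m (d^l) - msum (d^l) (map snd c))" using c unfolding det_code_def by auto
  have tb: "0 \<le> Re (mtrace (prod_channel A ss (fst (c ! i)) * snd (c ! i))) \<and>
      Re (mtrace (prod_channel A ss (fst (c ! i)) * snd (c ! i))) \<le> 1" if i: "i < M" for i
  proof -
    have xs: "length (fst (c ! i)) = l" using c i unfolding det_code_def by auto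
    obtain K us where rho: "prod_channel A ss (fst (c ! i)) \<in> carrier_mat (d^l) (d^l)"
      "mtrace (prod_channel A ss (fst (c ! i))) = 1" "decomp (d^l) (prod_channel A ss (fst (c ! i))) K us"
      using prod_channel_props[OF ch ss xs] by blast
    have "snd (c ! i) \<in> set (map snd c)" using i lc by auto
    from term_bounds[OF rho Ds I this] show ?thesis .
  qed
  define S where "S = (\<Sum>i<M. Re (mtrace (prod_channel A ss (fst (c ! i)) * snd (c ! i))))"
  have S0: "0 \<le> S" unfolding S_def using tb by (intro sum_nonneg) auto
  have "S \<le> (\<Sum>i<M. (1::real))" unfolding S_def using tb by (intro sum_mono) auto
  then have S1: "S \<le> real M" by simp
  have av: "avg_success A ss c = (1 / real M) * S" unfolding avg_success_def S_def lc ..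
  show ?thesis
  proof (cases "M = 0")
    case True then show ?thesis unfolding av by simp
  next
    case False
    then show ?thesis unfolding av using S0 S1 by (simp add: field_simps)
  qed
qed

lemma pow2_le: assumes "0 \<le> (y::real)" "y \<le> 1" shows "2 powr y \<le> 1 + y"
proof -
  have "exp ((1 - y) *\<^sub>R 0 + y *\<^sub>R ln 2) \<le> (1 - y) * exp 0 + y * exp (ln 2)"
    using convex_onD[OF exp_convex, of y 0 "ln 2"] assms by simp
  then show ?thesis by (simp add: powr_def mult.commute)
qed

lemma key_arith:
  fixes S l N :: nat and \<epsilon> n m :: real
  assumes l: "l \<ge> 1" and S: "S \<ge> 1" and e0: "0 \<le> \<epsilon>"
    and N: "real l powr n = real N"
    and e: "4 * \<epsilon> \<le> real l powr (- m)"
    and h: "2 * log 2 (real S) < real l powr (n - m - 1)"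
  shows "real S ^ l * (1 + \<epsilon>) ^ N < 2 powr (real N * real l powr (- m))"
proof -
  define \<delta> where "\<delta> = real l powr (- m)"
  have l0: "real l > 0" using l by simp
  have d0: "\<delta> > 0" unfolding \<delta>_def using l0 by simp
  have N0: "real N > 0" using N l0 by (metis powr_gt_zero of_nat_0_less_iff less_numeral_extra(3) of_nat_0_eq_iff gr0I)
  have "real l powr (n - m - 1) = real l powr (n + - m) / real l powr 1"
    using powr_diff[of "real l" "n + - m" 1] by simp
  also have "\<dots> = real N * \<delta> / real l"
  proof -
    have "real l powr (n + - m) = real l powr n * real l powr (-m)" by (rule powr_add)
    then show ?thesis unfolding \<delta>_def N[symmetric] using l0 by simp
  qed
  finally have lm: "real l powr (n - m - 1) = real N * \<delta> / real l" .
  define R where "R = real N * \<delta> / real l"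
  have "2 * log 2 (real S) < R" using h lm R_def by simp
  then have "log 2 (real S) < R / 2" by linarith
  then have "log 2 (real S) < (real N * \<delta> / real l) / 2" unfolding R_def .
  then have "real l * log 2 (real S) < real l * (real N * \<delta> / real l / 2)"
    by (rule mult_strict_left_mono) (use l0 in auto)
  then have h2: "real l * log 2 (real S) < real N * \<delta> / 2" using l0 by simp
  have S0: "real S > 0" using S by simp
  have "real S ^ l = real S powr real l" using powr_realpow[OF S0] by simp
  also have "\<dots> = (2 powr log 2 (real S)) powr real l" using S0 by simp
  also have "\<dots> = 2 powr (real l * log 2 (real S))" by (simp add: powr_powr mult.commute)
  finally have Sl: "real S ^ l = 2 powr (real l * log 2 (real S))" .
  have A1: "real S ^ l < 2 powr (real N * \<delta> / 2)" unfolding Sl using h2 by simp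
  have "(1 + \<epsilon>) ^ N \<le> exp \<epsilon> ^ N" using e0 by (intro power_mono) (auto simp: add.commute)
  also have "\<dots> = exp (real N * \<epsilon>)" by (simp add: exp_of_nat_mult)
  also have "\<dots> \<le> exp (real N * \<delta> / 2 * ln 2)"
  proof -
    have "\<epsilon> \<le> \<delta> / 4" using e unfolding \<delta>_def by simp
    moreover have "\<delta> / 4 \<le> \<delta> / 2 * ln 2" using ln2_ge_two_thirds d0 by simp
    ultimately have "real N * \<epsilon> \<le> real N * (\<delta> / 2 * ln 2)" using N0 by (intro mult_left_mono) auto
    then show ?thesis by simp
  qed
  also have "\<dots> = 2 powr (real N * \<delta> / 2)" by (simp add: powr_def)
  finally have A2: "(1 + \<epsilon>) ^ N \<le> 2 powr (real N * \<delta> / 2)" .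
  have "real S ^ l * (1 + \<epsilon>) ^ N < 2 powr (real N * \<delta> / 2) * 2 powr (real N * \<delta> / 2)"
    using A1 A2 e0 by (intro mult_less_le_imp_less) auto
  also have "\<dots> = 2 powr (real N * \<delta>)" by (simp add: mult.commute flip: powr_add)
  finally show ?thesis unfolding \<delta>_def .
qed


theorem lemma10:
  fixes A :: "'s::finite \<Rightarrow> 'x::finite \<Rightarrow> complex mat"
    and d l M N :: nat and \<mu> :: "('x list \<times> complex mat) list measure"
    and \<epsilon> n m :: real
  assumes "d \<ge> 1"
    and "\<forall>s. cq_channel d (A s)"
    and "l \<ge> 1"
    and "random_code d A l M \<mu>"
    and "0 \<le> \<epsilon>" and "\<epsilon> < 1"
    and "\<forall>ss. length ss = l \<longrightarrow> (\<integral>c. avg_success A ss c \<partial>\<mu>) \<ge> 1 - \<epsilon>"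
    and "real l powr n = real N"
    and "4 * \<epsilon> \<le> real l powr (- m)"
    and "2 * log 2 (real CARD('s)) < real l powr (n - m - 1)"
  shows "\<exists>C :: nat \<Rightarrow> ('x list \<times> complex mat) list.
           (\<forall>j<N. det_code d l M (C j)) \<and>
           (\<forall>ss. length ss = l \<longrightarrow>
              (1 / real N) * (\<Sum>j<N. avg_success A ss (C j)) \<ge> 1 - real l powr (- m))"
proof -
  from assms(4) have P: "prob_space \<mu>" and sp: "space \<mu> \<subseteq> {c. det_code d l M c}"
    and meas: "\<And>ss. length ss = l \<Longrightarrow> (\<lambda>c. avg_success A ss c) \<in> borel_measurable \<mu>"
    unfolding random_code_def by auto
  interpret prob_space \<mu> by (rule P)
  define SS where "SS = {ss::'s list. set ss \<subseteq> UNIV \<and> length ss = l}"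
  have finSS: "finite SS" unfolding SS_def by (rule finite_lists_length_eq) simp
  have cardSS: "card SS = CARD('s) ^ l" unfolding SS_def using card_lists_length_eq[of "UNIV::'s set" l] by simp
  have SSl: "\<And>ss. ss \<in> SS \<longleftrightarrow> length ss = l" unfolding SS_def by simp
  define Y where "Y = (\<lambda>ss c. 1 - avg_success A ss c)"
  have avb: "\<And>ss c. ss \<in> SS \<Longrightarrow> c \<in> space \<mu> \<Longrightarrow> 0 \<le> avg_success A ss c \<and> avg_success A ss c \<le> 1"
    using avg_bounds[OF assms(2)] sp SSl by blast
  have Ybd: "\<And>ss c. ss \<in> SS \<Longrightarrow> c \<in> space \<mu> \<Longrightarrow> 0 \<le> Y ss c \<and> Y ss c \<le> 1"
    unfolding Y_def using avb by fastforce
  have avmeas: "\<And>ss. ss \<in> SS \<Longrightarrow> (\<lambda>c. avg_success A ss c) \<in> borel_measurable \<mu>"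
    using meas SSl by blast
  have Ymeas: "\<And>ss. ss \<in> SS \<Longrightarrow> Y ss \<in> borel_measurable \<mu>"
    unfolding Y_def using avmeas by measurable
  have avint: "\<And>ss. ss \<in> SS \<Longrightarrow> integrable \<mu> (\<lambda>c. avg_success A ss c)"
  proof -
    fix ss assume ss: "ss \<in> SS"
    show "integrable \<mu> (\<lambda>c. avg_success A ss c)"
      by (rule integrable_const_bound[where B=1]) (use avb[OF ss] avmeas[OF ss] in \<open>auto intro!: AE_I2\<close>)
  qed
  have pmeas: "\<And>ss. ss \<in> SS \<Longrightarrow> (\<lambda>c. 2 powr Y ss c) \<in> borel_measurable \<mu>"
    using Ymeas by measurable
  have pint: "\<And>ss. ss \<in> SS \<Longrightarrow> integrable \<mu> (\<lambda>c. 2 powr Y ss c)"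
  proof -
    fix ss assume ss: "ss \<in> SS"
    have "\<And>c. c \<in> space \<mu> \<Longrightarrow> norm (2 powr Y ss c) \<le> 2"
    proof -
      fix c assume c: "c \<in> space \<mu>"
      have "2 powr Y ss c \<le> 2 powr 1" using Ybd[OF ss c] by (intro powr_mono) auto
      then show "norm (2 powr Y ss c) \<le> 2" by simp
    qed
    then show "integrable \<mu> (\<lambda>c. 2 powr Y ss c)"
      by (intro integrable_const_bound[where B=2] AE_I2 pmeas[OF ss]) auto
  qed
  have EY: "\<And>ss. ss \<in> SS \<Longrightarrow> (\<integral>c. Y ss c \<partial>\<mu>) \<le> \<epsilon>"
  proof -
    fix ss assume ss: "ss \<in> SS"
    have "(\<integral>c. Y ss c \<partial>\<mu>) = (\<integral>c. 1 \<partial>\<mu>) - (\<integral>c. avg_success A ss c \<partial>\<mu>)"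
      unfolding Y_def using Bochner_Integration.integral_diff[OF integrable_const avint[OF ss], of 1] by simp
    also have "\<dots> = 1 - (\<integral>c. avg_success A ss c \<partial>\<mu>)" by (simp add: prob_space)
    finally show "(\<integral>c. Y ss c \<partial>\<mu>) \<le> \<epsilon>" using assms(7) SSl ss by auto
  qed
  have E2: "\<And>ss. ss \<in> SS \<Longrightarrow> (\<integral>c. 2 powr Y ss c \<partial>\<mu>) \<le> 1 + \<epsilon>"
  proof -
    fix ss assume ss: "ss \<in> SS"
    have Yint: "integrable \<mu> (Y ss)" unfolding Y_def using avint[OF ss] by auto
    have "(\<integral>c. 2 powr Y ss c \<partial>\<mu>) \<le> (\<integral>c. 1 + Y ss c \<partial>\<mu>)"
      by (rule integral_mono) (use pint[OF ss] Yint Ybd[OF ss] pow2_le in auto)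
    also have "\<dots> = 1 + (\<integral>c. Y ss c \<partial>\<mu>)"
      using Yint by (simp add: integral_add prob_space)
    finally show "(\<integral>c. 2 powr Y ss c \<partial>\<mu>) \<le> 1 + \<epsilon>" using EY[OF ss] by simp
  qed
  have claim: "\<exists>C. (\<forall>j<k. C j \<in> space \<mu>) \<and>
      (\<Sum>ss\<in>SS. 2 powr (\<Sum>j<k. Y ss (C j))) \<le> real (card SS) * (1 + \<epsilon>) ^ k" for k
  proof (induction k)
    case 0
    show ?case by (intro exI[of _ "\<lambda>_. undefined"]) simp
  next
    case (Suc k)
    obtain C where C: "\<forall>j<k. C j \<in> space \<mu>"
      and Cb: "(\<Sum>ss\<in>SS. 2 powr (\<Sum>j<k. Y ss (C j))) \<le> real (card SS) * (1 + \<epsilon>) ^ k"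
      using Suc.IH by blast
    define w where "w ss = 2 powr (\<Sum>j<k. Y ss (C j))" for ss
    define f where "f c = (\<Sum>ss\<in>SS. w ss * 2 powr Y ss c)" for c
    have fint: "integrable \<mu> f" unfolding f_def
    proof (rule Bochner_Integration.integrable_sum)
      fix ss assume "ss \<in> SS"
      from pint[OF this] show "integrable \<mu> (\<lambda>c. w ss * 2 powr Y ss c)"
        by (rule Bochner_Integration.integrable_mult_right)
    qed
    have If: "(\<integral>c. f c \<partial>\<mu>) \<le> (1 + \<epsilon>) * (\<Sum>ss\<in>SS. w ss)"
    proof -
      have "(\<integral>c. f c \<partial>\<mu>) = (\<Sum>ss\<in>SS. (\<integral>c. w ss * 2 powr Y ss c \<partial>\<mu>))"
        unfolding f_def by (rule Bochner_Integration.integral_sum) (auto intro: pint)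
      also have "\<dots> = (\<Sum>ss\<in>SS. w ss * (\<integral>c. 2 powr Y ss c \<partial>\<mu>))" by simp
      also have "\<dots> \<le> (\<Sum>ss\<in>SS. w ss * (1 + \<epsilon>))"
        by (intro sum_mono mult_left_mono E2) (auto simp: w_def)
      finally show ?thesis by (simp add: sum_distrib_left mult.commute)
    qed
    obtain c where c: "c \<in> space \<mu>" "f c \<le> (\<integral>c. f c \<partial>\<mu>)"
    proof (rule ccontr)
      assume nt: "\<not> thesis"
      have lt: "\<forall>c\<in>space \<mu>. (\<integral>c. f c \<partial>\<mu>) < f c"
      proof
        fix c assume "c \<in> space \<mu>"
        then show "(\<integral>c. f c \<partial>\<mu>) < f c" using that nt by force
      qed
      have "(\<integral>c. (\<integral>x. f x \<partial>\<mu>) \<partial>\<mu>) < (\<integral>c. f c \<partial>\<mu>)"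
        by (rule integral_less_AE_space) (use fint lt emeasure_space_1 in \<open>auto intro!: AE_I2\<close>)
      then show False by (simp add: prob_space)
    qed
    define C' where "C' = C(k := c)"
    have eq: "(\<Sum>ss\<in>SS. 2 powr (\<Sum>j<Suc k. Y ss (C' j))) = f c"
    proof -
      have "\<And>ss. (\<Sum>j<Suc k. Y ss (C' j)) = (\<Sum>j<k. Y ss (C j)) + Y ss c"
        unfolding C'_def by simp
      then show ?thesis unfolding f_def w_def by (simp add: powr_add)
    qed
    have w0: "(\<Sum>ss\<in>SS. w ss) \<le> real (card SS) * (1 + \<epsilon>) ^ k" using Cb unfolding w_def .
    have "f c \<le> (1 + \<epsilon>) * (real (card SS) * (1 + \<epsilon>) ^ k)"
      using c(2) If mult_left_mono[OF w0, of "1 + \<epsilon>"] assms(5) by linarith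
    then have "(\<Sum>ss\<in>SS. 2 powr (\<Sum>j<Suc k. Y ss (C' j))) \<le> real (card SS) * (1 + \<epsilon>) ^ Suc k"
      unfolding eq by (simp add: mult_ac)
    moreover have "\<forall>j<Suc k. C' j \<in> space \<mu>" unfolding C'_def using C c(1) by auto
    ultimately show ?case by blast
  qed
  obtain C where C: "\<forall>j<N. C j \<in> space \<mu>"
    and Cb: "(\<Sum>ss\<in>SS. 2 powr (\<Sum>j<N. Y ss (C j))) \<le> real (card SS) * (1 + \<epsilon>) ^ N"
    using claim[of N] by blast
  have S1: "CARD('s) \<ge> 1" by (simp add: Suc_leI)
  have key: "real (card SS) * (1 + \<epsilon>) ^ N < 2 powr (real N * real l powr (- m))"
    unfolding cardSS of_nat_power using key_arith[OF assms(3) S1 assms(5) assms(8) assms(9) assms(10)] .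
  have l0: "real l > 0" using assms(3) by simp
  have N0: "real N > 0" using assms(8) l0 by (metis powr_gt_zero of_nat_0_less_iff less_numeral_extra(3) of_nat_0_eq_iff gr0I)
  show ?thesis
  proof (intro exI[of _ C] conjI allI impI)
    fix j assume "j < N" then show "det_code d l M (C j)" using C sp by auto
  next
    fix ss :: "'s list" assume ss: "length ss = l"
    then have ssS: "ss \<in> SS" using SSl by simp
    have "2 powr (\<Sum>j<N. Y ss (C j)) \<le> (\<Sum>ss\<in>SS. 2 powr (\<Sum>j<N. Y ss (C j)))"
      by (rule member_le_sum) (auto simp: ssS finSS)
    then have "2 powr (\<Sum>j<N. Y ss (C j)) < 2 powr (real N * real l powr (- m))" using Cb key by linarith
    then have lt: "(\<Sum>j<N. Y ss (C j)) < real N * real l powr (- m)" by simp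
    have "(\<Sum>j<N. Y ss (C j)) = real N - (\<Sum>j<N. avg_success A ss (C j))"
      unfolding Y_def by (simp add: sum_subtractf)
    with lt have "real N * (1 - real l powr (- m)) < (\<Sum>j<N. avg_success A ss (C j))"
      by (simp add: algebra_simps)
    then have "1 - real l powr (- m) < (\<Sum>j<N. avg_success A ss (C j)) / real N"
      using N0 by (simp add: field_simps)
    then show "1 - real l powr (- m) \<le> (1 / real N) * (\<Sum>j<N. avg_success A ss (C j))" by simp
  qed
qed

end
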